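(* Let $G$ be a finite group, $p$ a prime dividing $|G|$, $P\in\mathrm{Syl}_p(G)$ and $\Omega=\Omega_1(Z(P))$. If $C\le P$ is fully centralized, then $C\Omega\le P$ is fully centralized and $C_P(C\Omega)=C_P(C)$.
   Context: $\Omega_1(H)$ is the subgroup generated by the elements of order $p$ of $H$. A subgroup $Q\le P$ is fully centralized if $C_P(Q)$ is a Sylow $p$-subgroup of $C_G(Q)$ (equivalently, $|C_P(Q^g)|\le|C_P(Q)|$ for all $g\in G$ with $Q^g\le P$). *)

theory Defs
  imports "HOL-Algebra.Algebra" "HOL-Computational_Algebra.Primes"
begin

definition centralizer :: "('a, 'b) monoid_scheme \<Rightarrow> 'a set \<Rightarrow> 'a set" where
  "centralizer G H = {g \<in> carrier G. \<forall>h\<in>H. g \<otimes>\<^bsub>G\<^esub> h = h \<otimes>\<^bsub>G\<^esub> g}"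

definition subgroup_center :: "('a, 'b) monoid_scheme \<Rightarrow> 'a set \<Rightarrow> 'a set" where
  "subgroup_center G P = P \<inter> centralizer G P"

definition is_sylow :: "('a, 'b) monoid_scheme \<Rightarrow> nat \<Rightarrow> 'a set \<Rightarrow> bool" where
  "is_sylow H p S \<longleftrightarrow> subgroup S H \<and> card S = p ^ multiplicity p (order H)"

definition Omega1 :: "('a, 'b) monoid_scheme \<Rightarrow> nat \<Rightarrow> 'a set \<Rightarrow> 'a set" where
  "Omega1 G p H = generate G {x \<in> H. group.ord G x = p}"

definition fully_centralized :: "('a, 'b) monoid_scheme \<Rightarrow> nat \<Rightarrow> 'a set \<Rightarrow> 'a set \<Rightarrow> bool" where
  "fully_centralized G p P Q \<longleftrightarrow>
     subgroup Q G \<and> Q \<subseteq> P \<and>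
     is_sylow (G\<lparr>carrier := centralizer G Q\<rparr>) p (P \<inter> centralizer G Q)"

end

theory Submission
  imports Defs
begin

lemma cent_sub:
  fixes G (structure) and Y :: "'a set"
  assumes "group G" "Y \<subseteq> carrier G"
  shows "subgroup (centralizer G Y) G"
proof -
  interpret group G by fact
  show ?thesis
  proof (rule subgroupI)
    show "centralizer G Y \<subseteq> carrier G" by (auto simp: centralizer_def)
    show "centralizer G Y \<noteq> {}" using assms(2) by (auto simp: centralizer_def intro!: exI[of _ \<one>])
  next
    fix a assume a: "a \<in> centralizer G Y"
    show "inv a \<in> centralizer G Y"
      unfolding centralizer_def
    proof (safe)
      show "inv a \<in> carrier G" using a by (auto simp: centralizer_def)
    next
      fix h assume h: "h \<in> Y"
      have ac: "a \<in> carrier G" and c: "a \<otimes> h = h \<otimes> a" using a h by (auto simp: centralizer_def)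
      have hc: "h \<in> carrier G" using h assms by auto
      have "inv a \<otimes> h = inv a \<otimes> (h \<otimes> a) \<otimes> inv a" using ac hc by (simp add: m_assoc)
      also have "\<dots> = inv a \<otimes> (a \<otimes> h) \<otimes> inv a" using c by simp
      also have "\<dots> = h \<otimes> inv a" using ac hc by (simp add: m_assoc[symmetric])
      finally show "inv a \<otimes> h = h \<otimes> inv a" .
    qed
  next
    fix a b assume a: "a \<in> centralizer G Y" and b: "b \<in> centralizer G Y"
    show "a \<otimes> b \<in> centralizer G Y"
      unfolding centralizer_def
    proof (safe)
      show "a \<otimes> b \<in> carrier G" using a b by (auto simp: centralizer_def)
    next
      fix h assume h: "h \<in> Y"
      have ac: "a \<in> carrier G" and c: "a \<otimes> h = h \<otimes> a" using a h by (auto simp: centralizer_def)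
      have bc: "b \<in> carrier G" and d: "b \<otimes> h = h \<otimes> b" using b h by (auto simp: centralizer_def)
      have hc: "h \<in> carrier G" using h assms by auto
      have "a \<otimes> b \<otimes> h = a \<otimes> (h \<otimes> b)" using ac bc hc d by (simp add: m_assoc)
      also have "\<dots> = (a \<otimes> h) \<otimes> b" using ac bc hc by (simp add: m_assoc)
      also have "\<dots> = h \<otimes> (a \<otimes> b)" using ac bc hc c by (simp add: m_assoc)
      finally show "a \<otimes> b \<otimes> h = h \<otimes> (a \<otimes> b)" .
    qed
  qed
qed

lemma card_sub_dvd:
  fixes G (structure)
  assumes "group G" "subgroup H G" "subgroup K G" "H \<subseteq> K"
  shows "card H dvd card K"
proof -
  interpret group G by fact
  have s: "subgroup H (G\<lparr>carrier := K\<rparr>)" by (rule subgroup_incl[OF assms(2,3,4)])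
  have g: "group (G\<lparr>carrier := K\<rparr>)" by (rule subgroup_imp_group[OF assms(3)])
  have "card (rcosets\<^bsub>G\<lparr>carrier := K\<rparr>\<^esub> H) * card H = order (G\<lparr>carrier := K\<rparr>)"
    by (rule group.lagrange[OF g s])
  then have "card (rcosets\<^bsub>G\<lparr>carrier := K\<rparr>\<^esub> H) * card H = card K" by (simp add: order_def)
  then show ?thesis by (metis dvd_triv_right)
qed

theorem lemma5p11:
  fixes G (structure) and p :: nat and P C :: "'a set"
  assumes "group G" and "finite (carrier G)"
    and "Factorial_Ring.prime p" and "p dvd order G"
    and "is_sylow G p P"
    and "fully_centralized G p P C"
  shows "subgroup (C <#> Omega1 G p (subgroup_center G P)) G
         \<and> C <#> Omega1 G p (subgroup_center G P) \<subseteq> P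
         \<and> fully_centralized G p P (C <#> Omega1 G p (subgroup_center G P))
         \<and> P \<inter> centralizer G (C <#> Omega1 G p (subgroup_center G P)) = P \<inter> centralizer G C"
proof -
  interpret group G by fact
  define Z where "Z = subgroup_center G P"
  define W where "W = Omega1 G p Z"
  have PG: "subgroup P G" using assms(5) by (simp add: is_sylow_def)
  have CG: "subgroup C G" and CP: "C \<subseteq> P"
    and syl: "is_sylow (G\<lparr>carrier := centralizer G C\<rparr>) p (P \<inter> centralizer G C)"
    using assms(6) by (auto simp: fully_centralized_def)
  have Pc: "P \<subseteq> carrier G" using PG subgroup.subset by blast
  have ZG: "subgroup Z G" unfolding Z_def subgroup_center_def
    by (rule subgroups_Inter_pair[OF PG cent_sub[OF assms(1) Pc]])
  have WZ: "W \<subseteq> Z" unfolding W_def Omega1_def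
    by (rule generate_subgroup_incl[OF _ ZG]) auto
  have WG: "subgroup W G" unfolding W_def Omega1_def
    by (rule generate_is_subgroup) (use ZG subgroup.subset in blast)
  have Wcomm: "w \<otimes> x = x \<otimes> w" if "w \<in> W" "x \<in> P" for w x
    using WZ that unfolding Z_def subgroup_center_def centralizer_def by blast
  have WP: "W \<subseteq> P" using WZ unfolding Z_def subgroup_center_def by blast
  have Cc: "C \<subseteq> carrier G" using CG subgroup.subset by blast
  have Wc: "W \<subseteq> carrier G" using WG subgroup.subset by blast
  define CW where "CW = C <#> W"
  have CWsub: "subgroup CW G"
  proof (rule subgroupI)
    show "CW \<subseteq> carrier G" unfolding CW_def using Cc Wc by (auto simp: set_mult_def)
    show "CW \<noteq> {}" unfolding CW_def set_mult_def
      using subgroup.one_closed[OF CG] subgroup.one_closed[OF WG] by blast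
  next
    fix a assume "a \<in> CW"
    then obtain c w where c: "c \<in> C" and w: "w \<in> W" and a: "a = c \<otimes> w"
      unfolding CW_def set_mult_def by blast
    have cc: "c \<in> carrier G" and wc: "w \<in> carrier G" using c w Cc Wc by auto
    have ic: "inv c \<in> C" by (rule subgroup.m_inv_closed[OF CG c])
    have iw: "inv w \<in> W" by (rule subgroup.m_inv_closed[OF WG w])
    have "inv a = inv w \<otimes> inv c" using a cc wc by (simp add: inv_mult_group)
    also have "\<dots> = inv c \<otimes> inv w" using Wcomm[OF iw] ic CP by blast
    finally show "inv a \<in> CW" unfolding CW_def set_mult_def using ic iw by blast
  next
    fix a b assume "a \<in> CW" "b \<in> CW"
    then obtain c w c' w' where c: "c \<in> C" and w: "w \<in> W" and a: "a = c \<otimes> w"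
      and c': "c' \<in> C" and w': "w' \<in> W" and b: "b = c' \<otimes> w'"
      unfolding CW_def set_mult_def by blast
    have cc: "c \<in> carrier G" "w \<in> carrier G" "c' \<in> carrier G" "w' \<in> carrier G"
      using c w c' w' Cc Wc by auto
    have "a \<otimes> b = c \<otimes> (w \<otimes> c') \<otimes> w'" using a b cc by (simp add: m_assoc)
    also have "\<dots> = c \<otimes> (c' \<otimes> w) \<otimes> w'" using Wcomm[OF w] c' CP by auto
    also have "\<dots> = (c \<otimes> c') \<otimes> (w \<otimes> w')" using cc by (simp add: m_assoc)
    finally show "a \<otimes> b \<in> CW" unfolding CW_def set_mult_def
      using subgroup.m_closed[OF CG c c'] subgroup.m_closed[OF WG w w'] by blast
  qed
  have CWP: "CW \<subseteq> P" unfolding CW_def set_mult_def using CP WP subgroup.m_closed[OF PG] by blast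
  have CCW: "C \<subseteq> CW" unfolding CW_def set_mult_def
    using subgroup.one_closed[OF WG] Cc by force
  have CWc: "CW \<subseteq> carrier G" using CWP Pc by blast
  have cent_anti: "centralizer G CW \<subseteq> centralizer G C" using CCW unfolding centralizer_def by blast
  have eq: "P \<inter> centralizer G CW = P \<inter> centralizer G C"
  proof
    show "P \<inter> centralizer G CW \<subseteq> P \<inter> centralizer G C" using cent_anti by blast
  next
    show "P \<inter> centralizer G C \<subseteq> P \<inter> centralizer G CW"
    proof
      fix x assume x: "x \<in> P \<inter> centralizer G C"
      have xc: "x \<in> carrier G" using x Pc by blast
      have "x \<otimes> h = h \<otimes> x" if h: "h \<in> CW" for h
      proof -
        obtain c w where c: "c \<in> C" and w: "w \<in> W" and a: "h = c \<otimes> w"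
          using h unfolding CW_def set_mult_def by blast
        have cc: "c \<in> carrier G" "w \<in> carrier G" using c w Cc Wc by auto
        have xcm: "x \<otimes> c = c \<otimes> x" using x c unfolding centralizer_def by blast
        have xw: "w \<otimes> x = x \<otimes> w" using Wcomm[OF w] x by blast
        have "x \<otimes> h = (x \<otimes> c) \<otimes> w" using a cc xc by (simp add: m_assoc)
        also have "\<dots> = c \<otimes> (x \<otimes> w)" using xcm cc xc by (simp add: m_assoc)
        also have "\<dots> = c \<otimes> (w \<otimes> x)" using xw by simp
        also have "\<dots> = h \<otimes> x" using a cc xc by (simp add: m_assoc)
        finally show ?thesis .
      qed
      then show "x \<in> P \<inter> centralizer G CW" using x xc unfolding centralizer_def by blast
    qed
  qed
  define S where "S = P \<inter> centralizer G C"
  have KC: "subgroup (centralizer G C) G" using cent_sub[OF assms(1) Cc] .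
  have KCW: "subgroup (centralizer G CW) G" using cent_sub[OF assms(1) CWc] .
  have SG: "subgroup S G" unfolding S_def by (rule subgroups_Inter_pair[OF PG KC])
  have cardS: "card S = p ^ multiplicity p (card (centralizer G C))"
    using syl unfolding is_sylow_def order_def S_def by simp
  have SCW: "S \<subseteq> centralizer G CW" using eq unfolding S_def by blast
  have d1: "card S dvd card (centralizer G CW)" by (rule card_sub_dvd[OF assms(1) SG KCW SCW])
  have d2: "card (centralizer G CW) dvd card (centralizer G C)"
    by (rule card_sub_dvd[OF assms(1) KCW KC cent_anti])
  have fin: "finite (centralizer G C)" using assms(2) KC subgroup.subset finite_subset by metis
  have ne: "card (centralizer G C) \<noteq> 0" using fin subgroup.one_closed[OF KC] by auto
  have ne2: "card (centralizer G CW) \<noteq> 0" using d2 ne by auto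
  have m1: "multiplicity p (card (centralizer G CW)) \<le> multiplicity p (card (centralizer G C))"
    by (rule dvd_imp_multiplicity_le[OF d2 ne])
  have m2: "multiplicity p (card (centralizer G C)) \<le> multiplicity p (card (centralizer G CW))"
    using d1 cardS ne2 assms(3) not_prime_unit multiplicity_geI by metis
  have cardS2: "card (P \<inter> centralizer G CW) = p ^ multiplicity p (card (centralizer G CW))"
    using eq cardS m1 m2 unfolding S_def by simp
  have "subgroup (P \<inter> centralizer G CW) (G\<lparr>carrier := centralizer G CW\<rparr>)"
    using subgroup_incl[OF SG KCW SCW] eq unfolding S_def by simp
  then have fc: "fully_centralized G p P CW"
    unfolding fully_centralized_def is_sylow_def order_def using CWsub CWP cardS2 by simp
  from CWsub CWP fc eq show ?thesis unfolding CW_def W_def Z_def by (rule conjI[OF _ conjI[OF _ conjI]])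
qed

end
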